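(* Let $\mathbf{u}=(u_1,\dots,u_n)$ be the lazy voters' utility profile over a candidate set $C$, $|C|=m$, and let $\mathbf{a}^P=(a_{n+1},\dots,a_{n+s})$ be the principled voters' ballot profile. Then the game $G=(\mathcal{L},R^C,\mathbf{u},\mathbf{a}^P)$ admits a PNE $\mathbf{b}$ with $|W(\mathbf{b}+\mathbf{a}^P)|>1$ if and only if one of the following conditions holds: (1) each candidate is ranked first by at most one voter in $N\cup P$, and $\frac{1}{n+s}\sum_{i\in N\cup P}u_\ell(a_i)\ge\max_{i\in(N\cup P)\setminus\{\ell\}}u_\ell(a_i)$ for all $\ell\in N$; (2) there exist a set of candidates $X=\{c_{\ell_1},\dots,c_{\ell_k}\}$ with $k\ge2$, a positive integer $n'\le n$ with $n'/k\ge2$ such that $\mathrm{sc}(c,\mathbf{a}^P)<n'/k$ for each $c\notin X$, and a partition of the lazy voters into $k$ groups $N_1,\dots,N_k$ (some of which may be empty) such that (a) for each $j\in[k]$, $|N_j|+\mathrm{sc}(c_{\ell_j},\mathbf{a}^P)=n'/k$; (b) for each $j\in[k]$ and each $i\in N_j$, $c_{\ell_j}\succ_i c$ for all $c\in X\setminus\{c_{\ell_j}\}$; (c) for each $j\in[k]$ and each $i\in N_j$, $\frac{1}{k}\sum_{c\in X}u_i(c)\ge\max_{c\in X\setminus\{c_{\ell_j}\}}u_i(c)$; (d) for each $j\in[k]$, each $i\in N_j$, and each $c'\in C\setminus X$ with $\mathrm{sc}(c',\mathbf{a}^P)=n'/k-1$, $\frac{1}{k}\sum_{c\in X}u_i(c)\ge\frac{1}{k}\sum_{c\in(X\cup\{c'\})\setminus\{c_{\ell_j}\}}u_i(c)$.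 Moreover, if condition (1) holds then $G$ has a PNE where each lazy voter votes for her top candidate, and if condition (2) holds then $G$ has a PNE where each lazy voter votes for her top candidate in $X$. The game $G$ has no other PNE with two or more winners.
   Context: Let $C=\{c_1,\dots,c_m\}$ be candidates; $[k]=\{1,\dots,k\}$. There is a set $N=\{1,\dots,n\}$ of lazy voters and a set $P=\{n+1,\dots,n+s\}$ of principled voters. Every voter $i\in N\cup P$ has an injective utility function $u_i:C\to\mathbb{N}$ inducing $c\succ_i c'$ iff $u_i(c)>u_i(c')$, and top candidate $a_i$; $\mathbf{u}=(u_1,\dots,u_n)$. Principled voters are not players and always vote for their top candidate; their ballot vector is $\mathbf{a}^P=(a_{n+1},\dots,a_{n+s})$. A ballot vector of the lazy voters is $\mathbf{b}=(b_1,\dots,b_n)$, $b_i\in C\cup\{\bot\}$ ($\bot$ = abstain); $\mathbf{b}+\mathbf{a}^P$ is the combined ballot vector. For any ballot vector $\mathbf{x}$, $\mathrm{sc}(c,\mathbf{x})$ is the number of ballots for $c$ in $\mathbf{x}$ and $W(\mathbf{x})$ is the set of candidates of maximum score. Under $R^C$ the winner is chosen uniformly at random from $W(\mathbf{b}+\mathbf{a}^P)$; let $p_j(\mathbf{b})$ be the probability $c_j$ wins. Fix $0<\varepsilon<\min\{1/m,1/n\}$. Lazy voter $i$'s utility is $U_i(\mathbf{b})=\sum_jp_j(\mathbf{b})u_i(c_j)$ if $b_i\in C$ and that plus $\varepsilon$ if $b_i=\bot$. The game $(\mathcal{L},R^C,\mathbf{u},\mathbf{a}^P)$ has players $N$ with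 action sets $C\cup\{\bot\}$; a PNE is a $\mathbf{b}$ with $U_i(\mathbf{b})\ge U_i(\mathbf{b}_{-i},b')$ for all $i\in N$ and $b'\in C\cup\{\bot\}$, where $(\mathbf{b}_{-i},b')$ replaces $b_i$ by $b'$. *)

theory Defs
  imports Complex_Main
begin

(* A ballot of a lazy voter is a 'c option: Some c = vote for c, None = abstain (\<bottom>). *)

definition top_in :: "(nat \<Rightarrow> 'c \<Rightarrow> nat) \<Rightarrow> 'c set \<Rightarrow> nat \<Rightarrow> 'c" where
  "top_in u A i = (THE c. c \<in> A \<and> (\<forall>c'\<in>A. u i c' \<le> u i c))"


definition lazyN :: "nat \<Rightarrow> nat set" where "lazyN n = {1..n}"
definition princP :: "nat \<Rightarrow> nat \<Rightarrow> nat set" where "princP n s = {n+1..n+s}"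

definition scP :: "(nat \<Rightarrow> 'c \<Rightarrow> nat) \<Rightarrow> 'c set \<Rightarrow> nat \<Rightarrow> nat \<Rightarrow> 'c \<Rightarrow> nat" where
  "scP u C n s c = card {i \<in> princP n s. top_in u C i = c}"

definition sc :: "(nat \<Rightarrow> 'c \<Rightarrow> nat) \<Rightarrow> 'c set \<Rightarrow> nat \<Rightarrow> nat \<Rightarrow> (nat \<Rightarrow> 'c option) \<Rightarrow> 'c \<Rightarrow> nat" where
  "sc u C n s b c = card {i \<in> lazyN n. b i = Some c} + scP u C n s c"

definition winners :: "(nat \<Rightarrow> 'c \<Rightarrow> nat) \<Rightarrow> 'c set \<Rightarrow> nat \<Rightarrow> nat \<Rightarrow> (nat \<Rightarrow> 'c option) \<Rightarrow> 'c set" where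
  "winners u C n s b = {c \<in> C. \<forall>c'\<in>C. sc u C n s b c' \<le> sc u C n s b c}"

definition exp_util :: "(nat \<Rightarrow> 'c \<Rightarrow> nat) \<Rightarrow> 'c set \<Rightarrow> nat \<Rightarrow> nat \<Rightarrow> (nat \<Rightarrow> 'c option) \<Rightarrow> nat \<Rightarrow> real" where
  "exp_util u C n s b i =
     (\<Sum>c\<in>winners u C n s b. real (u i c)) / real (card (winners u C n s b))"

definition U :: "(nat \<Rightarrow> 'c \<Rightarrow> nat) \<Rightarrow> 'c set \<Rightarrow> nat \<Rightarrow> nat \<Rightarrow> real \<Rightarrow> (nat \<Rightarrow> 'c option) \<Rightarrow> nat \<Rightarrow> real" where
  "U u C n s \<epsilon> b i = exp_util u C n s b i + (if b i = None then \<epsilon> else 0)"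

definition ballots :: "'c set \<Rightarrow> 'c option set" where
  "ballots C = insert None (Some ` C)"

definition valid_profile :: "'c set \<Rightarrow> nat \<Rightarrow> (nat \<Rightarrow> 'c option) \<Rightarrow> bool" where
  "valid_profile C n b = (\<forall>i\<in>lazyN n. b i \<in> ballots C)"

definition is_PNE :: "(nat \<Rightarrow> 'c \<Rightarrow> nat) \<Rightarrow> 'c set \<Rightarrow> nat \<Rightarrow> nat \<Rightarrow> real \<Rightarrow> (nat \<Rightarrow> 'c option) \<Rightarrow> bool" where
  "is_PNE u C n s \<epsilon> b =
     (valid_profile C n b \<and>
      (\<forall>i\<in>lazyN n. \<forall>x\<in>ballots C. U u C n s \<epsilon> (b(i := x)) i \<le> U u C n s \<epsilon> b i))"

definition cond1 :: "(nat \<Rightarrow> 'c \<Rightarrow> nat) \<Rightarrow> 'c set \<Rightarrow> nat \<Rightarrow> nat \<Rightarrow> bool" where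
  "cond1 u C n s =
     ((\<forall>c\<in>C. card {i \<in> {1..n+s}. top_in u C i = c} \<le> 1) \<and>
      (\<forall>l\<in>lazyN n.
         (\<Sum>i\<in>{1..n+s}. real (u l (top_in u C i))) / real (n + s)
           \<ge> real (Max ((\<lambda>i. u l (top_in u C i)) ` ({1..n+s} - {l})))))"

(* Condition (2) for given data: X = {c_l1,...,c_lk} (k = card X), n', and the partition
   N_1..N_k of the lazy voters represented by an assignment g: voter i lies in the group
   N_j of candidate c_lj = g i (groups may be empty). *)
definition cond2_data :: "(nat \<Rightarrow> 'c \<Rightarrow> nat) \<Rightarrow> 'c set \<Rightarrow> nat \<Rightarrow> nat \<Rightarrow> 'c set \<Rightarrow> nat \<Rightarrow> (nat \<Rightarrow> 'c) \<Rightarrow> bool" where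
  "cond2_data u C n s X n' g =
     (let k = card X in
      X \<subseteq> C \<and> k \<ge> 2 \<and> 0 < n' \<and> n' \<le> n + s \<and> real n' / real k \<ge> 2 \<and>
      (\<forall>c\<in>C - X. real (scP u C n s c) < real n' / real k) \<and>
      (\<forall>i\<in>lazyN n. g i \<in> X) \<and>
      \<comment> \<open>(a)\<close>
      (\<forall>x\<in>X. real (card {i \<in> lazyN n. g i = x}) + real (scP u C n s x) = real n' / real k) \<and>
      \<comment> \<open>(b)\<close>
      (\<forall>i\<in>lazyN n. \<forall>c\<in>X - {g i}. u i (g i) > u i c) \<and>
      \<comment> \<open>(c)\<close>
      (\<forall>i\<in>lazyN n. (\<Sum>c\<in>X. real (u i c)) / real k \<ge> real (Max (u i ` (X - {g i})))) \<and>
      \<comment> \<open>(d)\<close>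
      (\<forall>i\<in>lazyN n. \<forall>c'\<in>C - X. real (scP u C n s c') = real n' / real k - 1 \<longrightarrow>
          (\<Sum>c\<in>X. real (u i c)) / real k \<ge> (\<Sum>c\<in>(insert c' X) - {g i}. real (u i c)) / real k))"

definition cond2 :: "(nat \<Rightarrow> 'c \<Rightarrow> nat) \<Rightarrow> 'c set \<Rightarrow> nat \<Rightarrow> nat \<Rightarrow> bool" where
  "cond2 u C n s = (\<exists>X n' g. cond2_data u C n s X n' g)"

end

theory Submission imports Defs begin

locale game =
  fixes C :: "'c set" and u :: "nat \<Rightarrow> 'c \<Rightarrow> nat" and n s :: nat and \<epsilon> :: real
  assumes finC: "finite C" and neC: "C \<noteq> {}"
    and inj: "\<forall>i\<in>{1..n+s}. inj_on (u i) C"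
    and ns2: "n + s \<ge> 2" and epos: "0 < \<epsilon>" and eC: "real (card C) * \<epsilon> < 1"
begin

lemma top_in_ex1:
  assumes i: "i \<in> {1..n+s}" and A: "A \<subseteq> C" "A \<noteq> {}"
  shows "\<exists>!c. c \<in> A \<and> (\<forall>c'\<in>A. u i c' \<le> u i c)"
proof -
  have fA: "finite A" using A finC finite_subset by blast
  have "Max (u i ` A) \<in> u i ` A" using fA A by (intro Max_in) auto
  then obtain c where c: "c \<in> A" "u i c = Max (u i ` A)" by auto
  have cm: "\<forall>c'\<in>A. u i c' \<le> u i c" using c fA by simp
  moreover have "d = c" if "d \<in> A" "\<forall>c'\<in>A. u i c' \<le> u i d" for d
  proof -
    have "u i d = u i c" using that c(1) cm by (meson le_antisym)
    then show ?thesis using inj i A that(1) c(1) by (meson inj_onD subsetD)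
  qed
  ultimately show ?thesis using c(1) by blast
qed

lemma top_in:
  assumes "i \<in> {1..n+s}" "A \<subseteq> C" "A \<noteq> {}"
  shows "top_in u A i \<in> A" "\<forall>c\<in>A. u i c \<le> u i (top_in u A i)"
  using theI'[OF top_in_ex1[OF assms]] unfolding top_in_def by auto

lemma top_in_strict:
  assumes "i \<in> {1..n+s}" "A \<subseteq> C" "c \<in> A" "c \<noteq> top_in u A i"
  shows "u i c < u i (top_in u A i)"
proof -
  have ne: "A \<noteq> {}" using assms by auto
  have "u i c \<le> u i (top_in u A i)" using top_in[OF assms(1,2) ne] assms(3) by auto
  moreover have "u i c \<noteq> u i (top_in u A i)"
    using inj assms top_in(1)[OF assms(1,2) ne] by (meson inj_onD subsetD)
  ultimately show ?thesis by simp
qed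

lemma top_in_eq:
  assumes "i \<in> {1..n+s}" "A \<subseteq> C" "x \<in> A" "\<forall>c\<in>A-{x}. u i c < u i x"
  shows "top_in u A i = x"
proof -
  have ne: "A \<noteq> {}" using assms by auto
  have "x \<in> A \<and> (\<forall>c'\<in>A. u i c' \<le> u i x)" using assms by (metis DiffI le_refl less_imp_le singletonD)
  then show ?thesis unfolding top_in_def
    using top_in_ex1[OF assms(1,2) ne] by (intro the1_equality) auto
qed

lemma lazy_in: "i \<in> lazyN n \<Longrightarrow> i \<in> {1..n+s}" by (auto simp: lazyN_def)

lemma sc_upd:
  assumes i: "i \<in> lazyN n"
  shows "sc u C n s (b(i:=x)) c + (if b i = Some c then 1 else 0) = sc u C n s b c + (if x = Some c then 1 else 0)"
proof -
  let ?A = "{j \<in> lazyN n - {i}. b j = Some c}"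
  have fA: "finite ?A" by (rule finite_subset[of _ "lazyN n"]) (auto simp: lazyN_def)
  have iA: "i \<notin> ?A" by simp
  have e1: "{j \<in> lazyN n. (b(i:=x)) j = Some c} = (if x = Some c then insert i ?A else ?A)" using i by auto
  have e2: "{j \<in> lazyN n. b j = Some c} = (if b i = Some c then insert i ?A else ?A)" using i by auto
  show ?thesis unfolding sc_def e1 e2 using fA iA by auto
qed

lemma winners_eq:
  assumes Y: "Y \<subseteq> C" "Y \<noteq> {}" and eqt: "\<forall>c\<in>Y. sc u C n s b c = t" and lt: "\<forall>c\<in>C-Y. sc u C n s b c < t"
  shows "winners u C n s b = Y"
proof
  obtain y where y: "y \<in> Y" using Y by auto
  show "winners u C n s b \<subseteq> Y"
  proof
    fix c assume c: "c \<in> winners u C n s b"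
    hence cC: "c \<in> C" and le: "sc u C n s b y \<le> sc u C n s b c" using y Y(1) by (auto simp: winners_def)
    show "c \<in> Y"
    proof (rule ccontr)
      assume "c \<notin> Y"
      hence "sc u C n s b c < t" using lt cC by blast
      moreover have "sc u C n s b y = t" using eqt y by blast
      ultimately show False using le by linarith
    qed
  qed
  show "Y \<subseteq> winners u C n s b"
  proof
    fix c assume c: "c \<in> Y"
    have "sc u C n s b c' \<le> sc u C n s b c" if "c' \<in> C" for c'
    proof (cases "c' \<in> Y")
      case True thus ?thesis using eqt c by simp
    next
      case False thus ?thesis using eqt c lt that by (metis DiffI less_imp_le)
    qed
    thus "c \<in> winners u C n s b" using c Y(1) unfolding winners_def by blast
  qed
qed

lemma winners_sub: "winners u C n s b \<subseteq> C" by (auto simp: winners_def)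

lemma winners_ne: "winners u C n s b \<noteq> {}"
proof -
  have "Max (sc u C n s b ` C) \<in> sc u C n s b ` C" using finC neC by (intro Max_in) auto
  then obtain c where c: "c \<in> C" "sc u C n s b c = Max (sc u C n s b ` C)" by auto
  have "c \<in> winners u C n s b" using c finC by (auto simp: winners_def)
  thus ?thesis by auto
qed

lemma winners_iff:
  assumes w: "w \<in> winners u C n s b"
  shows "c \<in> winners u C n s b \<longleftrightarrow> c \<in> C \<and> sc u C n s b c = sc u C n s b w"
proof
  have wC: "w \<in> C" and wm: "\<forall>c'\<in>C. sc u C n s b c' \<le> sc u C n s b w" using w by (auto simp: winners_def)
  {
    assume c: "c \<in> winners u C n s b"
    hence cC: "c \<in> C" and cm: "\<forall>c'\<in>C. sc u C n s b c' \<le> sc u C n s b c" by (auto simp: winners_def)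
    have "sc u C n s b c = sc u C n s b w" using cm wm cC wC by (meson le_antisym)
    thus "c \<in> C \<and> sc u C n s b c = sc u C n s b w" using cC by blast
  }
  {
    assume c: "c \<in> C \<and> sc u C n s b c = sc u C n s b w"
    thus "c \<in> winners u C n s b" using wm unfolding winners_def by auto
  }
qed

lemma winners_le:
  assumes "w \<in> winners u C n s b" "c \<in> C"
  shows "sc u C n s b c \<le> sc u C n s b w"
  using assms unfolding winners_def by auto

lemma exp_single: "winners u C n s b = {d} \<Longrightarrow> exp_util u C n s b i = real (u i d)"
  by (simp add: exp_util_def)

lemma eps_lt: "Y \<subseteq> C \<Longrightarrow> Y \<noteq> {} \<Longrightarrow> \<epsilon> < 1 / real (card Y)"
proof -
  assume a: "Y \<subseteq> C" "Y \<noteq> {}"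
  have fY: "finite Y" using finite_subset[OF a(1) finC] .
  have "card Y \<le> card C" "card Y > 0" using a finC fY card_mono by (auto simp: card_gt_0_iff)
  hence "real (card Y) * \<epsilon> < 1" using eC epos
    by (smt (verit) mult_right_mono of_nat_le_iff)
  thus ?thesis using \<open>card Y > 0\<close> by (simp add: field_simps)
qed

end

lemma nat_real_lt: "(a::nat) < b \<Longrightarrow> real a \<le> real b - 1"
  by linarith

lemma avg_top_gap:
  fixes f :: "'c \<Rightarrow> nat"
  assumes fin: "finite Y" and x: "x \<in> Y" and k: "card Y \<ge> 2" and lt: "\<forall>c\<in>Y-{x}. f c < f x"
  shows "(\<Sum>c\<in>Y. real (f c)) / real (card Y) + 1 / real (card Y) \<le> real (f x)"
proof -
  have s: "(\<Sum>c\<in>Y. real (f c)) = real (f x) + (\<Sum>c\<in>Y-{x}. real (f c))"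
    using fin x by (simp add: sum.remove)
  have "(\<Sum>c\<in>Y-{x}. real (f c)) \<le> (\<Sum>c\<in>Y-{x}. real (f x) - 1)"
    using lt by (intro sum_mono) (simp add: nat_real_lt)
  also have "\<dots> = (real (card Y) - 1) * (real (f x) - 1)" using fin x k by (simp add: card_Diff_singleton of_nat_diff)
  finally have le: "(\<Sum>c\<in>Y-{x}. real (f c)) \<le> (real (card Y) - 1) * (real (f x) - 1)" .
  have kp: "real (card Y) \<ge> 2" using k by simp
  have "(\<Sum>c\<in>Y. real (f c)) + 1 \<le> real (card Y) * real (f x)"
    using s le kp by (simp add: algebra_simps)
  thus ?thesis using kp by (simp add: field_simps)
qed

lemma avg_remove_gap:
  fixes f :: "'c \<Rightarrow> nat"
  assumes fin: "finite Y" and x: "x \<in> Y" and k: "card Y \<ge> 2" and lt: "\<forall>c\<in>Y-{x}. f c < f x"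
  shows "(\<Sum>c\<in>Y-{x}. real (f c)) / real (card (Y-{x})) + 1 / real (card Y) \<le> (\<Sum>c\<in>Y. real (f c)) / real (card Y)"
proof -
  have s: "(\<Sum>c\<in>Y. real (f c)) = real (f x) + (\<Sum>c\<in>Y-{x}. real (f c))"
    using fin x by (simp add: sum.remove)
  have "(\<Sum>c\<in>Y-{x}. real (f c)) \<le> (\<Sum>c\<in>Y-{x}. real (f x) - 1)"
    using lt by (intro sum_mono) (simp add: nat_real_lt)
  also have "\<dots> = (real (card Y) - 1) * (real (f x) - 1)" using fin x k by (simp add: card_Diff_singleton of_nat_diff)
  finally have le: "(\<Sum>c\<in>Y-{x}. real (f c)) \<le> (real (card Y) - 1) * (real (f x) - 1)" .
  have kp: "real (card Y) \<ge> 2" using k by simp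
  have cd: "real (card (Y-{x})) = real (card Y) - 1" using fin x k by (simp add: card_Diff_singleton of_nat_diff)
  define S where "S = (\<Sum>c\<in>Y-{x}. real (f c))"
  define K where "K = real (card Y)"
  have le': "S \<le> (K - 1) * (real (f x) - 1)" using le by (simp add: S_def K_def)
  have K2: "K \<ge> 2" using kp K_def by simp
  have "S / (K - 1) + 1 / K \<le> (real (f x) + S) / K"
  proof -
    have h: "K + (S + real (f x)) \<le> 1 + K * real (f x)"
      using le' by (simp add: algebra_simps)
    have "K * (K + (S + real (f x))) \<le> K * (1 + K * real (f x))"
      using mult_left_mono[OF h, of K] K2 by simp
    hence "K * K + (K * S + K * real (f x)) \<le> K + K * (K * real (f x))"
      by (simp add: algebra_simps)
    thus ?thesis using K2 by (simp add: field_simps)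
  qed
  thus ?thesis using s cd by (simp add: S_def K_def)
qed

lemma sum_fibers_le:
  assumes "finite A" "finite Y" "inj_on g Y"
  shows "(\<Sum>c\<in>Y. card {j\<in>A. f j = g c}) \<le> card A"
proof -
  have "(\<Sum>c\<in>Y. card {j\<in>A. f j = g c}) = card (\<Union>c\<in>Y. {j\<in>A. f j = g c})"
    using assms by (subst card_UN_disjoint) (auto dest: inj_onD)
  also have "\<dots> \<le> card A" using assms by (intro card_mono) auto
  finally show ?thesis .
qed


lemma one_le_card: "finite A \<Longrightarrow> a \<in> A \<Longrightarrow> 1 \<le> card A"
  by (metis One_nat_def Suc_leI card_gt_0_iff empty_iff)

lemma swap_sum:
  fixes f :: "'c \<Rightarrow> real"
  assumes "finite Y" "c \<in> Y" "a \<notin> Y"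
  shows "(\<Sum>x\<in>insert a (Y-{c}). f x) = (\<Sum>x\<in>Y. f x) - f c + f a"
     "card (insert a (Y-{c})) = card Y"
proof -
  have "(\<Sum>x\<in>insert a (Y-{c}). f x) = f a + (\<Sum>x\<in>Y-{c}. f x)" using assms by simp
  moreover have "(\<Sum>x\<in>Y. f x) = f c + (\<Sum>x\<in>Y-{c}. f x)" using assms by (simp add: sum.remove)
  ultimately show "(\<Sum>x\<in>insert a (Y-{c}). f x) = (\<Sum>x\<in>Y. f x) - f c + f a" by simp
  show "card (insert a (Y-{c})) = card Y" using assms
    by (simp add: card_Diff_singleton) (metis Suc_pred card_gt_0_iff empty_iff)
qed

context game begin

abbreviation "SC b c \<equiv> sc u C n s b c"
abbreviation "WIN b \<equiv> winners u C n s b"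
abbreviation "AVG Y i \<equiv> (\<Sum>c\<in>Y. real (u i c)) / real (card Y)"

lemma U_upd: "U u C n s \<epsilon> (b(i:=x)) i = AVG (WIN (b(i:=x))) i + (if x = None then \<epsilon> else 0)"
  by (simp add: U_def exp_util_def)

lemma U_eq: "U u C n s \<epsilon> b i = AVG (WIN b) i + (if b i = None then \<epsilon> else 0)"
  by (simp add: U_def exp_util_def)

lemma sc_other: "i \<in> lazyN n \<Longrightarrow> b i \<noteq> Some c \<Longrightarrow> x \<noteq> Some c \<Longrightarrow> SC (b(i:=x)) c = SC b c"
  using sc_upd[of i b x c] by simp

lemma sc_gain: "i \<in> lazyN n \<Longrightarrow> b i \<noteq> Some c \<Longrightarrow> SC (b(i:=Some c)) c = SC b c + 1"
  using sc_upd[of i b "Some c" c] by simp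

lemma sc_loss: "i \<in> lazyN n \<Longrightarrow> b i = Some c \<Longrightarrow> x \<noteq> Some c \<Longrightarrow> SC (b(i:=x)) c + 1 = SC b c"
  using sc_upd[of i b x c] by simp

lemma raise_win:
  assumes i: "i \<in> lazyN n" and xC: "x \<in> C" and bx: "b i \<noteq> Some x" and mx: "\<forall>c\<in>C. SC b c \<le> SC b x"
  shows "WIN (b(i:=Some x)) = {x}"
proof (rule winners_eq[of _ _ "SC b x + 1"])
  show "{x} \<subseteq> C" "{x} \<noteq> {}" using xC by auto
  show "\<forall>c\<in>{x}. SC (b(i:=Some x)) c = SC b x + 1" using sc_gain[of i b x] i bx by simp
  show "\<forall>c\<in>C-{x}. SC (b(i:=Some x)) c < SC b x + 1"
  proof
    fix c assume c: "c \<in> C - {x}"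
    have "SC (b(i:=Some x)) c \<le> SC b c" using sc_upd[of i b "Some x" c] i c by auto
    thus "SC (b(i:=Some x)) c < SC b x + 1" using mx c by force
  qed
qed

lemma ballots_Some: "c \<in> C \<Longrightarrow> Some c \<in> ballots C" by (simp add: ballots_def)
lemma ballots_None: "None \<in> ballots C" by (simp add: ballots_def)

lemma finite_lazy: "finite {j \<in> lazyN n. P j}"
  by (rule finite_subset[of _ "lazyN n"]) (auto simp: lazyN_def)
lemma finite_princ: "finite {j \<in> princP n s. P j}"
  by (rule finite_subset[of _ "princP n s"]) (auto simp: princP_def)

lemma sc_all:
  assumes "\<forall>j\<in>lazyN n. b j = Some (top_in u C j)"
  shows "SC b c = card {j\<in>{1..n+s}. top_in u C j = c}"
proof -
  have e: "{j\<in>{1..n+s}. top_in u C j = c} = {j\<in>lazyN n. b j = Some c} \<union> {j\<in>princP n s. top_in u C j = c}"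
    using assms by (auto simp: lazyN_def princP_def)
  have d: "{j\<in>lazyN n. b j = Some c} \<inter> {j\<in>princP n s. top_in u C j = c} = {}"
    by (auto simp: lazyN_def princP_def)
  show ?thesis unfolding e sc_def scP_def
    by (subst card_Un_disjoint) (auto simp: finite_lazy finite_princ d)
qed

end
context game begin

lemma necessity:
  assumes pne: "is_PNE u C n s \<epsilon> b" and k2: "card (WIN b) > 1"
  shows "(cond1 u C n s \<and> (\<forall>i\<in>lazyN n. b i = Some (top_in u C i)))
          \<or> (\<exists>X n' g. cond2_data u C n s X n' g \<and> (\<forall>i\<in>lazyN n. b i = Some (top_in u X i)))"
proof -
  define W where "W = WIN b"
  have WC: "W \<subseteq> C" unfolding W_def by (rule winners_sub)
  have fW: "finite W" using WC finC finite_subset by blast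
  have Wne: "W \<noteq> {}" unfolding W_def by (rule winners_ne)
  have k2': "card W \<ge> 2" using k2 by (simp add: W_def)
  obtain w where w: "w \<in> W" using Wne by auto
  define t where "t = SC b w"
  have Wiff: "c \<in> W \<longleftrightarrow> c \<in> C \<and> SC b c = t" for c
    using winners_iff[of w b c] w unfolding W_def t_def by simp
  have Win: "SC b c = t" if "c \<in> W" for c using Wiff that by blast
  have Wi: "c \<in> W" if "c \<in> C" "SC b c = t" for c using Wiff that by blast
  have Wout: "SC b c < t" if "c \<in> C" "c \<notin> W" for c
  proof -
    have "SC b c \<le> t" using winners_le[of w b c] w that(1) unfolding W_def t_def by simp
    moreover have "SC b c \<noteq> t" using Wi that by blast
    ultimately show ?thesis by simp
  qed
  have scle: "c \<in> C \<Longrightarrow> SC b c \<le> t" for c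
    using winners_le[of w b c] w unfolding W_def t_def by simp
  have eps: "\<epsilon> < 1 / real (card W)" using eps_lt[OF WC Wne] .
  have kpos: "real (card W) > 0" using k2' by simp
  have dev: "U u C n s \<epsilon> (b(i:=x)) i \<le> U u C n s \<epsilon> b i" if "i \<in> lazyN n" "x \<in> ballots C" for i x
    using pne that unfolding is_PNE_def by blast
  have valid: "b i = None \<or> (\<exists>c\<in>C. b i = Some c)" if "i \<in> lazyN n" for i
    using pne that unfolding is_PNE_def valid_profile_def ballots_def by auto
  have Ub: "U u C n s \<epsilon> b i = AVG W i + (if b i = None then \<epsilon> else 0)" for i
    by (simp add: U_eq W_def)
  have topW: "top_in u W i \<in> W" if "i \<in> lazyN n" for i
    using top_in(1)[OF lazy_in[OF that] WC Wne] .
  have gap: "AVG W i + 1 / real (card W) \<le> real (u i (top_in u W i))" if i: "i \<in> lazyN n" for i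
  proof -
    have "\<forall>c\<in>W-{top_in u W i}. u i c < u i (top_in u W i)"
      using top_in_strict[OF lazy_in[OF i] WC] by blast
    thus ?thesis using avg_top_gap[OF fW topW[OF i] k2'] by simp
  qed
  have N1: "b i \<noteq> None" if i: "i \<in> lazyN n" for i
  proof
    assume bn: "b i = None"
    let ?x = "top_in u W i"
    have xW: "?x \<in> W" using topW[OF i] .
    have win: "WIN (b(i:=Some ?x)) = {?x}"
      by (rule raise_win[OF i]) (use xW WC bn scle Win[OF xW] in auto)
    have "U u C n s \<epsilon> (b(i:=Some ?x)) i = real (u i ?x)" by (simp add: U_upd win)
    moreover have "U u C n s \<epsilon> b i = AVG W i + \<epsilon>" using Ub bn by simp
    moreover have "U u C n s \<epsilon> (b(i:=Some ?x)) i \<le> U u C n s \<epsilon> b i"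
      using dev[OF i ballots_Some] xW WC by blast
    ultimately show False using gap[OF i] eps by linarith
  qed
  have N2: "c \<in> W" if i: "i \<in> lazyN n" and bi: "b i = Some c" for i c
  proof (rule ccontr)
    assume cW: "c \<notin> W"
    have cC: "c \<in> C" using valid[OF i] bi by auto
    have ct: "SC b c < t" using Wout[OF cC cW] .
    let ?b = "b(i:=None)"
    have win: "WIN ?b = W"
    proof (rule winners_eq[OF WC Wne, of _ t])
      show "\<forall>d\<in>W. SC ?b d = t"
      proof
        fix d assume d: "d \<in> W"
        have "d \<noteq> c" using d cW by auto
        hence "SC ?b d = SC b d" using sc_other[of i b d None] i bi by simp
        thus "SC ?b d = t" using Win[OF d] by simp
      qed
      show "\<forall>d\<in>C-W. SC ?b d < t"
      proof
        fix d assume d: "d \<in> C - W"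
        show "SC ?b d < t"
        proof (cases "d = c")
          case True thus ?thesis using sc_loss[of i b c None] i bi ct by simp
        next
          case False thus ?thesis using sc_other[of i b d None] i bi d Wout[of d] by auto
        qed
      qed
    qed
    have "U u C n s \<epsilon> ?b i = AVG W i + \<epsilon>" by (simp add: U_upd win)
    moreover have "U u C n s \<epsilon> b i = AVG W i" using Ub bi by simp
    ultimately show False using dev[OF i ballots_None] epos by simp
  qed
  have N3: "b i = Some (top_in u W i)" if i: "i \<in> lazyN n" for i
  proof (rule ccontr)
    assume ne: "b i \<noteq> Some (top_in u W i)"
    let ?x = "top_in u W i"
    have xW: "?x \<in> W" using topW[OF i] .
    have win: "WIN (b(i:=Some ?x)) = {?x}"
      by (rule raise_win[OF i]) (use xW WC ne scle Win[OF xW] in auto)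
    have "U u C n s \<epsilon> (b(i:=Some ?x)) i = real (u i ?x)" by (simp add: U_upd win)
    moreover have "U u C n s \<epsilon> b i = AVG W i" by (simp add: Ub N1[OF i])
    moreover have "U u C n s \<epsilon> (b(i:=Some ?x)) i \<le> U u C n s \<epsilon> b i"
      using dev[OF i ballots_Some] xW WC by blast
    moreover have "0 < 1 / real (card W)" using kpos by simp
    ultimately show False using gap[OF i] by linarith
  qed
  have t1: "t \<ge> 1"
  proof (cases "n \<ge> 1")
    case True
    hence i: "1 \<in> lazyN n" by (simp add: lazyN_def)
    let ?x = "top_in u W 1"
    have xW: "?x \<in> W" using topW[OF i] .
    have "1 \<le> card {j \<in> lazyN n. b j = Some ?x}"
      using one_le_card[OF finite_lazy, of 1] N3[OF i] i by simp
    hence "SC b ?x \<ge> 1" by (simp add: sc_def)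
    thus ?thesis using Win[OF xW] by simp
  next
    case False
    hence n0: "n = 0" and s2: "s \<ge> 2" using ns2 by auto
    have p: "n+1 \<in> {1..n+s}" using s2 by simp
    let ?x = "top_in u C (n+1)"
    have xC: "?x \<in> C" using top_in(1)[OF p _ neC] by simp
    have "1 \<le> card {j \<in> princP n s. top_in u C j = ?x}"
      using one_le_card[OF finite_princ, of "n+1"] s2 by (simp add: princP_def)
    hence "SC b ?x \<ge> 1" by (simp add: sc_def scP_def)
    thus ?thesis using scle[OF xC] by simp
  qed
  show ?thesis
  proof (cases "t = 1")
    case True
    have T1: "b i = Some (top_in u C i)" if i: "i \<in> lazyN n" for i
    proof (rule ccontr)
      let ?a = "top_in u C i"
      let ?c = "top_in u W i"
      assume ne: "b i \<noteq> Some ?a"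
      have bi: "b i = Some ?c" using N3[OF i] .
      have cW: "?c \<in> W" using topW[OF i] .
      have aC: "?a \<in> C" using top_in(1)[OF lazy_in[OF i] _ neC] by simp
      have ca: "?c \<noteq> ?a" using ne bi by auto
      have ua: "u i ?c < u i ?a" using top_in_strict[OF lazy_in[OF i], of C ?c] cW WC ca by auto
      have Ub': "U u C n s \<epsilon> b i = AVG W i" by (simp add: Ub N1[OF i])
      show False
      proof (cases "?a \<in> W")
        case True
        have win: "WIN (b(i:=Some ?a)) = {?a}"
          by (rule raise_win[OF i aC]) (use True ne scle Win[OF True] in auto)
        have "U u C n s \<epsilon> (b(i:=Some ?a)) i = real (u i ?a)" by (simp add: U_upd win)
        moreover have "\<forall>d\<in>W-{?a}. u i d < u i ?a"
          using top_in_strict[OF lazy_in[OF i], of C] WC by blast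
        hence "AVG W i + 1 / real (card W) \<le> real (u i ?a)"
          using avg_top_gap[OF fW True k2'] by simp
        moreover have "0 < 1 / real (card W)" using kpos by simp
        ultimately show False using dev[OF i ballots_Some[OF aC]] Ub' by linarith
      next
        case False
        have aW: "?a \<notin> W" using False .
        have a0: "SC b ?a = 0" using Wout[OF aC False] \<open>t = 1\<close> by simp
        let ?b = "b(i:=Some ?a)"
        let ?Y = "insert ?a (W - {?c})"
        have win: "WIN ?b = ?Y"
        proof (rule winners_eq[of _ _ 1])
          show "?Y \<subseteq> C" "?Y \<noteq> {}" using aC WC by auto
          have sa: "SC ?b ?a = 1" using sc_gain[of i b ?a] i ne a0 by simp
          have so: "SC ?b d = SC b d" if "d \<noteq> ?c" "d \<noteq> ?a" for d
            using sc_other[of i b d "Some ?a"] i bi that by auto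
          have scc: "SC ?b ?c = 0" using sc_loss[of i b ?c "Some ?a"] i bi ca Win[OF cW] \<open>t=1\<close> by auto
          show "\<forall>d\<in>?Y. SC ?b d = 1" using sa so Win aW \<open>t=1\<close> by fastforce
          show "\<forall>d\<in>C-?Y. SC ?b d < 1"
          proof
            fix d assume d: "d \<in> C - ?Y"
            show "SC ?b d < 1"
            proof (cases "d = ?c")
              case True thus ?thesis using scc by simp
            next
              case False
              hence "d \<notin> W" "d \<noteq> ?a" using d by auto
              thus ?thesis using so[OF False] d Wout[of d] \<open>t=1\<close> by fastforce
            qed
          qed
        qed
        have "AVG W i < AVG ?Y i"
          using swap_sum(1)[where f="\<lambda>x. real (u i x)", OF fW cW False] swap_sum(2)[OF fW cW False] ua kpos
          by (simp add: divide_strict_right_mono)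
        moreover have "U u C n s \<epsilon> ?b i = AVG ?Y i" using ne by (simp add: U_upd win)
        ultimately show False using dev[OF i ballots_Some[OF aC]] Ub' by linarith
      qed
    qed
    have scall: "SC b c = card {j\<in>{1..n+s}. top_in u C j = c}" for c using sc_all T1 by blast
    let ?top = "top_in u C"
    have c1: "\<forall>c\<in>C. card {j\<in>{1..n+s}. ?top j = c} \<le> 1" using scall scle True by metis
    have topC: "?top j \<in> C" if "j \<in> {1..n+s}" for j using top_in(1)[OF that _ neC] by simp
    have injt: "inj_on ?top {1..n+s}"
    proof (rule inj_onI)
      fix j j' assume j: "j \<in> {1..n+s}" and j': "j' \<in> {1..n+s}" and e: "?top j = ?top j'"
      have f: "finite {jj\<in>{1..n+s}. ?top jj = ?top j}" by simp
      have "card {jj\<in>{1..n+s}. ?top jj = ?top j} \<le> Suc 0" using c1 topC[OF j] by simp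
      hence "\<forall>a1\<in>{jj\<in>{1..n+s}. ?top jj = ?top j}. \<forall>a2\<in>{jj\<in>{1..n+s}. ?top jj = ?top j}. a1 = a2"
        using card_le_Suc0_iff_eq[OF f] by blast
      thus "j = j'" using j j' e by auto
    qed
    define T where "T = ?top ` {1..n+s}"
    have WT: "W = T"
    proof
      show "W \<subseteq> T"
      proof
        fix c assume c: "c \<in> W"
        hence "card {j\<in>{1..n+s}. ?top j = c} = 1" using Win[OF c] scall True by simp
        hence "{j\<in>{1..n+s}. ?top j = c} \<noteq> {}" by (metis card.empty zero_neq_one)
        thus "c \<in> T" unfolding T_def by auto
      qed
      show "T \<subseteq> W"
      proof
        fix c assume "c \<in> T"
        then obtain j where j: "j \<in> {1..n+s}" and cj: "c = ?top j" unfolding T_def by auto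
        have "1 \<le> card {jj\<in>{1..n+s}. ?top jj = c}" using one_le_card[of _ j] j cj by simp
        moreover have "card {jj\<in>{1..n+s}. ?top jj = c} \<le> 1" using c1 topC[OF j] cj by simp
        ultimately show "c \<in> W" using Wi[OF topC[OF j]] scall True cj by simp
      qed
    qed
    have cardT: "card T = n + s" unfolding T_def using card_image[OF injt] by simp
    have c2: "(\<Sum>i\<in>{1..n+s}. real (u l (?top i))) / real (n + s)
           \<ge> real (Max ((\<lambda>i. u l (?top i)) ` ({1..n+s} - {l})))" if l: "l \<in> lazyN n" for l
    proof -
      have avgeq: "(\<Sum>i\<in>{1..n+s}. real (u l (?top i))) / real (n + s) = AVG W l"
      proof -
        have "(\<Sum>c\<in>T. real (u l c)) = (\<Sum>i\<in>{1..n+s}. real (u l (?top i)))"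
          unfolding T_def using sum.reindex[OF injt, of "\<lambda>c. real (u l c)"] by (simp only: comp_def)
        thus ?thesis using WT cardT by simp
      qed
      have ne: "{1..n+s} - {l} \<noteq> {}"
      proof -
        have "card ({1..n+s} - {l}) \<ge> 1" using ns2 lazy_in[OF l] by (simp add: card_Diff_singleton)
        thus ?thesis by (metis card.empty le_zero_eq one_neq_zero)
      qed
      have "Max ((\<lambda>i. u l (?top i)) ` ({1..n+s} - {l})) \<in> (\<lambda>i. u l (?top i)) ` ({1..n+s} - {l})"
        using ne by (intro Max_in) auto
      then obtain j where j: "j \<in> {1..n+s} - {l}" and mj: "Max ((\<lambda>i. u l (?top i)) ` ({1..n+s} - {l})) = u l (?top j)"
        by blast
      let ?d = "?top j"
      have dne: "?d \<noteq> ?top l" using injt j lazy_in[OF l] by (auto dest: inj_onD)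
      have dC: "?d \<in> C" using topC j by auto
      have dW: "?d \<in> W" using WT j unfolding T_def by auto
      have win: "WIN (b(l:=Some ?d)) = {?d}"
        by (rule raise_win[OF l dC]) (use T1[OF l] dne dW scle Win[OF dW] in auto)
      have "U u C n s \<epsilon> (b(l:=Some ?d)) l = real (u l ?d)" by (simp add: U_upd win)
      moreover have "U u C n s \<epsilon> b l = AVG W l" by (simp add: Ub N1[OF l])
      ultimately have "real (u l ?d) \<le> AVG W l" using dev[OF l ballots_Some[OF dC]] by simp
      thus ?thesis using avgeq mj by simp
    qed
    have "cond1 u C n s" unfolding cond1_def using c1 c2 by blast
    thus ?thesis using T1 by blast
  next
    case False
    hence t2: "t \<ge> 2" using t1 by simp
    define g where "g = (\<lambda>i. top_in u W i)"
    have cnt: "{j\<in>lazyN n. g j = c} = {j\<in>lazyN n. b j = Some c}" for c using N3 by (auto simp: g_def)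
    have noLazy: "SC b c = scP u C n s c" if "c \<notin> W" for c
    proof -
      have e: "{j\<in>lazyN n. b j = Some c} = {}" using N3 topW that by fastforce
      show ?thesis unfolding sc_def e by simp
    qed
    have ratio: "real (card W * t) / real (card W) = real t" using kpos by simp
    have sumW: "(\<Sum>c\<in>W. SC b c) = card W * t" using sum.cong[of W W "SC b" "\<lambda>_. t"] Win by simp
    have sumsplit: "(\<Sum>c\<in>W. SC b c) = (\<Sum>c\<in>W. card {j\<in>lazyN n. b j = Some c}) + (\<Sum>c\<in>W. scP u C n s c)"
      by (simp add: sc_def sum.distrib)
    have s1: "(\<Sum>c\<in>W. card {j\<in>lazyN n. b j = Some c}) \<le> n"
      using sum_fibers_le[of "lazyN n" W Some b] fW by (simp add: lazyN_def)
    have s2: "(\<Sum>c\<in>W. scP u C n s c) \<le> s"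
      using sum_fibers_le[of "princP n s" W "\<lambda>x. x" "top_in u C"] fW by (simp add: princP_def scP_def)
    have cd: "cond2_data u C n s W (card W * t) g"
      unfolding cond2_data_def Let_def
    proof (intro conjI)
      show "W \<subseteq> C" by (rule WC)
      show "2 \<le> card W" by (rule k2')
      show "0 < card W * t" using k2' t2 by simp
      show "card W * t \<le> n + s" using sumW sumsplit s1 s2 by linarith
      show "2 \<le> real (card W * t) / real (card W)" using ratio t2 by simp
      show "\<forall>c\<in>C - W. real (scP u C n s c) < real (card W * t) / real (card W)"
        using ratio noLazy Wout by fastforce
      show "\<forall>i\<in>lazyN n. g i \<in> W" using topW by (simp add: g_def)
      show "\<forall>x\<in>W. real (card {i \<in> lazyN n. g i = x}) + real (scP u C n s x) = real (card W * t) / real (card W)"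
      proof
        fix x assume x: "x \<in> W"
        have "card {i \<in> lazyN n. g i = x} + scP u C n s x = t" using cnt Win[OF x] by (simp add: sc_def)
        thus "real (card {i \<in> lazyN n. g i = x}) + real (scP u C n s x) = real (card W * t) / real (card W)"
          using ratio by (metis of_nat_add)
      qed
      show "\<forall>i\<in>lazyN n. \<forall>c\<in>W - {g i}. u i c < u i (g i)"
      proof (intro ballI)
        fix i c assume i: "i \<in> lazyN n" and c: "c \<in> W - {g i}"
        show "u i c < u i (g i)" using top_in_strict[OF lazy_in[OF i] WC, of c] c by (simp add: g_def)
      qed
      show "\<forall>i\<in>lazyN n. real (Max (u i ` (W - {g i}))) \<le> (\<Sum>c\<in>W. real (u i c)) / real (card W)"
      proof
        fix i assume i: "i \<in> lazyN n"
        have "card (W - {g i}) \<ge> 1" using k2' topW[OF i] by (simp add: g_def card_Diff_singleton fW)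
        hence ne: "W - {g i} \<noteq> {}" by (metis card.empty le_zero_eq one_neq_zero)
        have "Max (u i ` (W - {g i})) \<in> u i ` (W - {g i})" using ne fW by (intro Max_in) auto
        then obtain d where d: "d \<in> W - {g i}" and md: "Max (u i ` (W - {g i})) = u i d" by blast
        have dC: "d \<in> C" using d WC by auto
        have win: "WIN (b(i:=Some d)) = {d}"
          by (rule raise_win[OF i dC]) (use N3[OF i] d scle Win[of d] in \<open>auto simp: g_def\<close>)
        have "U u C n s \<epsilon> (b(i:=Some d)) i = real (u i d)" by (simp add: U_upd win)
        moreover have "U u C n s \<epsilon> b i = AVG W i" by (simp add: Ub N1[OF i])
        ultimately have "real (u i d) \<le> AVG W i" using dev[OF i ballots_Some[OF dC]] by simp
        thus "real (Max (u i ` (W - {g i}))) \<le> AVG W i" using md by simp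
      qed
      show "\<forall>i\<in>lazyN n. \<forall>c'\<in>C - W. real (scP u C n s c') = real (card W * t) / real (card W) - 1 \<longrightarrow>
          (\<Sum>c\<in>insert c' W - {g i}. real (u i c)) / real (card W) \<le> (\<Sum>c\<in>W. real (u i c)) / real (card W)"
      proof (intro ballI impI)
        fix i c' assume i: "i \<in> lazyN n" and c': "c' \<in> C - W"
          and e: "real (scP u C n s c') = real (card W * t) / real (card W) - 1"
        have sp: "scP u C n s c' + 1 = t" using e ratio t2 by linarith
        have scc': "SC b c' + 1 = t" using sp noLazy c' by simp
        let ?gi = "g i"
        have giW: "?gi \<in> W" using topW[OF i] by (simp add: g_def)
        have bi: "b i = Some ?gi" using N3[OF i] by (simp add: g_def)
        have ne: "b i \<noteq> Some c'" using bi giW c' by auto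
        let ?b = "b(i:=Some c')"
        let ?Y = "insert c' W - {?gi}"
        have win: "WIN ?b = ?Y"
        proof (rule winners_eq[of _ _ t])
          show "?Y \<subseteq> C" "?Y \<noteq> {}" using c' WC giW by auto
          have sa: "SC ?b c' = t" using sc_gain[of i b c'] i ne scc' by simp
          have so: "SC ?b d = SC b d" if "d \<noteq> ?gi" "d \<noteq> c'" for d
            using sc_other[of i b d "Some c'"] i bi that by auto
          have sg: "SC ?b ?gi + 1 = t" using sc_loss[of i b ?gi "Some c'"] i bi giW c' Win[OF giW] by auto
          show "\<forall>d\<in>?Y. SC ?b d = t" using sa so Win c' by fastforce
          show "\<forall>d\<in>C-?Y. SC ?b d < t"
          proof
            fix d assume d: "d \<in> C - ?Y"
            show "SC ?b d < t"
            proof (cases "d = ?gi")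
              case True thus ?thesis using sg by simp
            next
              case False
              hence "d \<notin> W" "d \<noteq> c'" using d by auto
              thus ?thesis using so[OF False] d Wout[of d] by fastforce
            qed
          qed
        qed
        have cY: "card ?Y = card W" using fW giW c' by (simp add: card_Diff_singleton)
        have "U u C n s \<epsilon> ?b i = AVG ?Y i" by (simp add: U_upd win)
        moreover have "U u C n s \<epsilon> b i = AVG W i" by (simp add: Ub N1[OF i])
        ultimately have "AVG ?Y i \<le> AVG W i" using dev[OF i ballots_Some[of c']] c' by (metis DiffD1)
        thus "(\<Sum>c\<in>?Y. real (u i c)) / real (card W) \<le> AVG W i" using cY by simp
      qed
    qed
    moreover have "\<forall>i\<in>lazyN n. b i = Some (top_in u W i)" using N3 by blast
    ultimately show ?thesis by blast
  qed
qed

end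

context game begin

lemma suff1:
  assumes c: "cond1 u C n s"
  shows "is_PNE u C n s \<epsilon> (\<lambda>i. Some (top_in u C i)) \<and> card (WIN (\<lambda>i. Some (top_in u C i))) > 1"
proof -
  define b where "b = (\<lambda>i. Some (top_in u C i))"
  let ?top = "top_in u C"
  have c1: "\<forall>c\<in>C. card {j\<in>{1..n+s}. ?top j = c} \<le> 1" using c unfolding cond1_def by blast
  have c2: "\<forall>l\<in>lazyN n. (\<Sum>i\<in>{1..n+s}. real (u l (?top i))) / real (n + s)
           \<ge> real (Max ((\<lambda>i. u l (?top i)) ` ({1..n+s} - {l})))" using c unfolding cond1_def by blast
  have topC: "?top j \<in> C" if "j \<in> {1..n+s}" for j using top_in(1)[OF that _ neC] by simp
  have injt: "inj_on ?top {1..n+s}"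
  proof (rule inj_onI)
    fix j j' assume j: "j \<in> {1..n+s}" and j': "j' \<in> {1..n+s}" and e: "?top j = ?top j'"
    have f: "finite {jj\<in>{1..n+s}. ?top jj = ?top j}" by simp
    have "card {jj\<in>{1..n+s}. ?top jj = ?top j} \<le> Suc 0" using c1 topC[OF j] by simp
    hence "\<forall>a1\<in>{jj\<in>{1..n+s}. ?top jj = ?top j}. \<forall>a2\<in>{jj\<in>{1..n+s}. ?top jj = ?top j}. a1 = a2"
      using card_le_Suc0_iff_eq[OF f] by blast
    thus "j = j'" using j j' e by auto
  qed
  define T where "T = ?top ` {1..n+s}"
  have TC: "T \<subseteq> C" using topC unfolding T_def by auto
  have fT: "finite T" unfolding T_def by simp
  have cardT: "card T = n + s" unfolding T_def using card_image[OF injt] by simp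
  have T2: "card T \<ge> 2" using ns2 cardT by simp
  have Tne: "T \<noteq> {}" using T2 by auto
  have scall: "SC b c = card {j\<in>{1..n+s}. ?top j = c}" for c using sc_all[of b] by (simp add: b_def)
  have scT: "SC b c = 1" if cT: "c \<in> T" for c
  proof -
    obtain j where j: "j \<in> {1..n+s}" and cj: "c = ?top j" using cT unfolding T_def by auto
    have "1 \<le> card {jj\<in>{1..n+s}. ?top jj = c}" using one_le_card[of _ j] j cj by simp
    moreover have "card {jj\<in>{1..n+s}. ?top jj = c} \<le> 1" using c1 topC[OF j] cj by simp
    ultimately show ?thesis using scall by simp
  qed
  have sc0: "SC b c = 0" if cT: "c \<notin> T" for c
  proof -
    have "{jj\<in>{1..n+s}. ?top jj = c} = {}" using cT unfolding T_def by auto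
    thus ?thesis using scall by simp
  qed
  have scle1: "SC b c \<le> 1" for c using scT sc0 by (cases "c \<in> T") auto
  have winb: "WIN b = T"
    by (rule winners_eq[OF TC Tne, of _ 1]) (use scT sc0 in auto)
  have eps: "\<epsilon> < 1 / real (card T)" using eps_lt[OF TC Tne] .
  have valid: "valid_profile C n b" using topC lazy_in by (auto simp: valid_profile_def ballots_def b_def)
  have Ub: "U u C n s \<epsilon> b l = AVG T l" for l unfolding U_eq winb by (simp add: b_def)
  have strict: "u l c < u l (?top l)" if "l \<in> lazyN n" "c \<in> T" "c \<noteq> ?top l" for l c
    using top_in_strict[OF lazy_in[OF that(1)], of C c] that TC by auto
  have avgeq: "(\<Sum>i\<in>{1..n+s}. real (u l (?top i))) / real (n + s) = AVG T l" for l
  proof -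
    have "(\<Sum>c\<in>T. real (u l c)) = (\<Sum>i\<in>{1..n+s}. real (u l (?top i)))"
      unfolding T_def using sum.reindex[OF injt, of "\<lambda>c. real (u l c)"] by (simp only: comp_def)
    thus ?thesis using cardT by simp
  qed
  have dev: "U u C n s \<epsilon> (b(l:=x)) l \<le> U u C n s \<epsilon> b l" if l: "l \<in> lazyN n" and x: "x \<in> ballots C" for l x
  proof -
    let ?a = "?top l"
    have aT: "?a \<in> T" using lazy_in[OF l] unfolding T_def by auto
    have bl: "b l = Some ?a" by (simp add: b_def)
    from x consider "x = None" | d where "x = Some d" "d \<in> C" unfolding ballots_def by auto
    then show ?thesis
    proof cases
      case 1
      let ?b = "b(l:=None)"
      have win: "WIN ?b = T - {?a}"
      proof (rule winners_eq[of _ _ 1])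
        show "T - {?a} \<subseteq> C" using TC by auto
        have "card (T - {?a}) \<ge> 1" using T2 aT fT by (simp add: card_Diff_singleton)
        thus "T - {?a} \<noteq> {}" by (metis card.empty le_zero_eq one_neq_zero)
        show "\<forall>d\<in>T-{?a}. SC ?b d = 1"
        proof
          fix d assume d: "d \<in> T - {?a}"
          have "SC ?b d = SC b d" using sc_other[of l b d None] l bl d by auto
          thus "SC ?b d = 1" using scT d by simp
        qed
        show "\<forall>d\<in>C-(T-{?a}). SC ?b d < 1"
        proof
          fix d assume d: "d \<in> C - (T - {?a})"
          show "SC ?b d < 1"
          proof (cases "d = ?a")
            case True thus ?thesis using sc_loss[of l b ?a None] l bl scT[OF aT] by simp
          next
            case False thus ?thesis using sc_other[of l b d None] l bl d sc0[of d] by auto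
          qed
        qed
      qed
      have "\<forall>c\<in>T-{?a}. u l c < u l ?a" using strict[OF l] by blast
      hence "AVG (T-{?a}) l + 1/real(card T) \<le> AVG T l" using avg_remove_gap[OF fT aT T2] by simp
      then show ?thesis using 1 win Ub eps by (simp add: U_upd)
    next
      case (2 d)
      show ?thesis
      proof (cases "d = ?a")
        case True
        have "b(l:=x) = b" using 2 True bl by (metis fun_upd_triv)
        thus ?thesis by simp
      next
        case False
        have bd: "b l \<noteq> Some d" using False bl by simp
        show ?thesis
        proof (cases "d \<in> T")
          case True
          have win: "WIN (b(l:=Some d)) = {d}"
            by (rule raise_win[of l d b]) (use l \<open>d \<in> C\<close> bd scle1 scT[OF True] in auto)
          obtain j where j: "j \<in> {1..n+s}" and dj: "d = ?top j" using True unfolding T_def by auto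
          have jl: "j \<in> {1..n+s} - {l}" using j dj False by auto
          have "u l d \<le> Max ((\<lambda>i. u l (?top i)) ` ({1..n+s} - {l}))"
            using jl dj by (intro Max_ge) auto
          hence m1: "real (u l d) \<le> real (Max ((\<lambda>i. u l (?top i)) ` ({1..n+s} - {l})))" by simp
          have m2: "real (Max ((\<lambda>i. u l (?top i)) ` ({1..n+s} - {l}))) \<le> AVG T l"
            using bspec[OF c2 l] avgeq[of l] by simp
          have "real (u l d) \<le> AVG T l" using m1 m2 by linarith
          thus ?thesis using 2 win Ub by (simp add: U_upd)
        next
          case dT: False
          let ?b = "b(l:=Some d)"
          let ?Y = "insert d (T - {?a})"
          have win: "WIN ?b = ?Y"
          proof (rule winners_eq[of _ _ 1])
            show "?Y \<subseteq> C" "?Y \<noteq> {}" using TC \<open>d \<in> C\<close> by auto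
            have sa: "SC ?b d = 1" using sc_gain[of l b d] l bd sc0[OF dT] by simp
            have so: "SC ?b e = SC b e" if "e \<noteq> ?a" "e \<noteq> d" for e
              using sc_other[of l b e "Some d"] l bl that by auto
            have sca: "SC ?b ?a = 0" using sc_loss[of l b ?a "Some d"] l bl False scT[OF aT] by auto
            show "\<forall>e\<in>?Y. SC ?b e = 1" using sa so scT dT by fastforce
            show "\<forall>e\<in>C-?Y. SC ?b e < 1"
            proof
              fix e assume e: "e \<in> C - ?Y"
              show "SC ?b e < 1"
              proof (cases "e = ?a")
                case True thus ?thesis using sca by simp
              next
                case False
                hence "e \<notin> T" "e \<noteq> d" using e by auto
                thus ?thesis using so[OF False] sc0 by simp
              qed
            qed
          qed
          have ud: "u l d < u l ?a" using top_in_strict[OF lazy_in[OF l], of C d] \<open>d \<in> C\<close> False by auto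
          have "AVG ?Y l < AVG T l"
            using swap_sum(1)[where f="\<lambda>x. real (u l x)", OF fT aT dT] swap_sum(2)[OF fT aT dT] ud T2
            by (simp add: divide_strict_right_mono)
          thus ?thesis using 2 win Ub by (simp add: U_upd)
        qed
      qed
    qed
  qed
  have "is_PNE u C n s \<epsilon> b" unfolding is_PNE_def using valid dev by blast
  moreover have "card (WIN b) > 1" using winb T2 by simp
  ultimately show ?thesis by (simp add: b_def)
qed

end

context game begin

lemma suff2:
  assumes cd: "cond2_data u C n s X n' g"
  shows "is_PNE u C n s \<epsilon> (\<lambda>i. Some (top_in u X i)) \<and> card (WIN (\<lambda>i. Some (top_in u X i))) > 1"
proof -
  define b where "b = (\<lambda>i. Some (top_in u X i))"
  have XC: "X \<subseteq> C" and k2: "card X \<ge> 2" and rk2: "real n' / real (card X) \<ge> 2"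
    and outX: "\<forall>c\<in>C - X. real (scP u C n s c) < real n' / real (card X)"
    and gX: "\<forall>i\<in>lazyN n. g i \<in> X"
    and ca: "\<forall>x\<in>X. real (card {i \<in> lazyN n. g i = x}) + real (scP u C n s x) = real n' / real (card X)"
    and cb: "\<forall>i\<in>lazyN n. \<forall>c\<in>X - {g i}. u i (g i) > u i c"
    and cc: "\<forall>i\<in>lazyN n. (\<Sum>c\<in>X. real (u i c)) / real (card X) \<ge> real (Max (u i ` (X - {g i})))"
    and cdd: "\<forall>i\<in>lazyN n. \<forall>c'\<in>C - X. real (scP u C n s c') = real n' / real (card X) - 1 \<longrightarrow>
          (\<Sum>c\<in>X. real (u i c)) / real (card X) \<ge> (\<Sum>c\<in>(insert c' X) - {g i}. real (u i c)) / real (card X)"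
    using cd unfolding cond2_data_def Let_def by blast+
  have fX: "finite X" using XC finC finite_subset by blast
  have Xne: "X \<noteq> {}" using k2 by auto
  obtain x0 where x0: "x0 \<in> X" using Xne by auto
  define t where "t = card {i \<in> lazyN n. g i = x0} + scP u C n s x0"
  have rt: "real t = real n' / real (card X)" using ca x0 by (simp add: t_def)
  have t2: "t \<ge> 2" using rt rk2 by linarith
  have gtop: "g i = top_in u X i" if i: "i \<in> lazyN n" for i
    using top_in_eq[OF lazy_in[OF i] XC bspec[OF gX i] bspec[OF cb i]] by simp
  have bg: "b i = Some (g i)" if "i \<in> lazyN n" for i using gtop[OF that] by (simp add: b_def)
  have scX: "SC b x = t" if x: "x \<in> X" for x
  proof -
    have e: "{j\<in>lazyN n. b j = Some x} = {j\<in>lazyN n. g j = x}" using bg by auto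
    have "real (card {i \<in> lazyN n. g i = x}) + real (scP u C n s x) = real t" using ca x rt by simp
    hence "card {i \<in> lazyN n. g i = x} + scP u C n s x = t" by linarith
    thus ?thesis unfolding sc_def e by simp
  qed
  have scO: "SC b c = scP u C n s c" if c: "c \<notin> X" for c
  proof -
    have e: "{j\<in>lazyN n. b j = Some c} = {}" using bg gX c by fastforce
    show ?thesis unfolding sc_def e by simp
  qed
  have scOut: "SC b c < t" if c: "c \<in> C" "c \<notin> X" for c
  proof -
    have "real (scP u C n s c) < real t" using outX c rt by auto
    thus ?thesis using scO[OF c(2)] by simp
  qed
  have scle: "SC b c \<le> t" if "c \<in> C" for c using scX scOut that by (cases "c \<in> X") (auto intro: less_imp_le)
  have winb: "WIN b = X"
    by (rule winners_eq[OF XC Xne, of _ t]) (use scX scOut in auto)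
  have eps: "\<epsilon> < 1 / real (card X)" using eps_lt[OF XC Xne] .
  have kpos: "real (card X) > 0" using k2 by simp
  have valid: "valid_profile C n b"
    using XC gX bg by (auto simp: valid_profile_def ballots_def)
  have Ub: "U u C n s \<epsilon> b l = AVG X l" for l unfolding U_eq winb by (simp add: b_def)
  have dev: "U u C n s \<epsilon> (b(l:=x)) l \<le> U u C n s \<epsilon> b l" if l: "l \<in> lazyN n" and x: "x \<in> ballots C" for l x
  proof -
    let ?a = "g l"
    have aX: "?a \<in> X" using gX l by blast
    have bl: "b l = Some ?a" using bg[OF l] .
    have strict: "\<forall>c\<in>X-{?a}. u l c < u l ?a" using cb l by blast
    have gapX: "AVG (X-{?a}) l + 1/real(card X) \<le> AVG X l" using avg_remove_gap[OF fX aX k2 strict] by simp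
    have neX: "X - {?a} \<noteq> {}"
    proof -
      have "card (X - {?a}) \<ge> 1" using k2 aX fX by (simp add: card_Diff_singleton)
      thus ?thesis by (metis card.empty le_zero_eq one_neq_zero)
    qed
    have so: "SC (b(l:=x)) e = SC b e" if "e \<noteq> ?a" "x \<noteq> Some e" for e
      using sc_other[of l b e x] l bl that by auto
    have sa: "SC (b(l:=x)) ?a + 1 = t" if "x \<noteq> Some ?a"
      using sc_loss[of l b ?a x] l bl that scX[OF aX] by auto
    have winlow: "WIN (b(l:=x)) = X - {?a}" if xa: "x \<noteq> Some ?a" and xX: "\<forall>d. x = Some d \<longrightarrow> d \<notin> X \<and> SC b d + 1 < t"
    proof (rule winners_eq[of _ _ t])
      show "X - {?a} \<subseteq> C" using XC by auto
      show "X - {?a} \<noteq> {}" by (rule neX)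
      show "\<forall>d\<in>X-{?a}. SC (b(l:=x)) d = t"
      proof
        fix d assume d: "d \<in> X - {?a}"
        have "x \<noteq> Some d" using xX d by auto
        thus "SC (b(l:=x)) d = t" using so[of d] d scX by auto
      qed
      show "\<forall>d\<in>C-(X-{?a}). SC (b(l:=x)) d < t"
      proof
        fix d assume d: "d \<in> C - (X - {?a})"
        show "SC (b(l:=x)) d < t"
        proof (cases "d = ?a")
          case True thus ?thesis using sa[OF xa] by simp
        next
          case False
          hence dX: "d \<notin> X" using d by auto
          show ?thesis
          proof (cases "x = Some d")
            case True
            have "SC (b(l:=x)) d = SC b d + 1" using sc_gain[of l b d] l bl aX dX True by auto
            thus ?thesis using xX True by simp
          next
            case False2: False
            thus ?thesis using so[OF False False2] scOut d dX by simp
          qed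
        qed
      qed
    qed
    from x consider "x = None" | d where "x = Some d" "d \<in> C" unfolding ballots_def by auto
    then show ?thesis
    proof cases
      case 1
      have win: "WIN (b(l:=x)) = X - {?a}" by (rule winlow) (use 1 in auto)
      then show ?thesis using 1 Ub eps gapX by (simp add: U_upd)
    next
      case (2 d)
      show ?thesis
      proof (cases "d = ?a")
        case True
        have "b(l:=x) = b" using 2 True bl by (metis fun_upd_triv)
        thus ?thesis by simp
      next
        case False
        have bd: "b l \<noteq> Some d" using False bl by simp
        show ?thesis
        proof (cases "d \<in> X")
          case True
          have win: "WIN (b(l:=Some d)) = {d}"
            by (rule raise_win[of l d b]) (use l \<open>d \<in> C\<close> bd scle scX[OF True] in auto)
          have "u l d \<le> Max (u l ` (X - {?a}))"
            using True False fX by (intro Max_ge) auto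
          hence m1: "real (u l d) \<le> real (Max (u l ` (X - {?a})))" by simp
          have m2: "real (Max (u l ` (X - {?a}))) \<le> AVG X l" using cc l by blast
          have "real (u l d) \<le> AVG X l" using m1 m2 by linarith
          thus ?thesis using 2 win Ub by (simp add: U_upd)
        next
          case dX: False
          have sd: "SC b d < t" using scOut[OF \<open>d \<in> C\<close> dX] .
          show ?thesis
          proof (cases "SC b d + 1 < t")
            case True
            have win: "WIN (b(l:=x)) = X - {?a}" by (rule winlow) (use 2 False dX True in auto)
            have "0 < 1 / real (card X)" using kpos by simp
            hence "AVG (X-{?a}) l \<le> AVG X l" using gapX by linarith
            thus ?thesis using win Ub 2 by (simp add: U_upd)
          next
            case eqt: False
            hence sdt: "SC b d + 1 = t" using sd by simp
            let ?Y = "insert d X - {?a}"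
            have win: "WIN (b(l:=x)) = ?Y"
            proof (rule winners_eq[of _ _ t])
              show "?Y \<subseteq> C" "?Y \<noteq> {}" using XC \<open>d \<in> C\<close> False by auto
              have sdd: "SC (b(l:=x)) d = t" using sc_gain[of l b d] l bd sdt 2 by simp
              show "\<forall>e\<in>?Y. SC (b(l:=x)) e = t" using sdd so scX 2 dX by fastforce
              show "\<forall>e\<in>C-?Y. SC (b(l:=x)) e < t"
              proof
                fix e assume e: "e \<in> C - ?Y"
                show "SC (b(l:=x)) e < t"
                proof (cases "e = ?a")
                  case True thus ?thesis using sa 2 False by auto
                next
                  case False
                  hence "e \<notin> X" "e \<noteq> d" using e by auto
                  thus ?thesis using so[OF False] 2 scOut e by auto
                qed
              qed
            qed
            have cY: "card ?Y = card X" using fX aX dX False by (simp add: card_Diff_singleton)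
            have "real (scP u C n s d) = real n' / real (card X) - 1"
              using sdt scO[OF dX] rt by simp
            hence "(\<Sum>c\<in>?Y. real (u l c)) / real (card X) \<le> AVG X l"
              using cdd l \<open>d \<in> C\<close> dX by blast
            thus ?thesis using win Ub cY 2 by (simp add: U_upd)
          qed
        qed
      qed
    qed
  qed
  have "is_PNE u C n s \<epsilon> b" unfolding is_PNE_def using valid dev by blast
  moreover have "card (WIN b) > 1" using winb k2 by simp
  ultimately show ?thesis by (simp add: b_def)
qed

end

theorem proposition8:
  fixes C :: "'c set" and u :: "nat \<Rightarrow> 'c \<Rightarrow> nat" and n s :: nat and \<epsilon> :: real
  assumes "finite C" and "C \<noteq> {}"
    and "\<forall>i\<in>{1..n+s}. inj_on (u i) C"
    and "n + s \<ge> 2"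
    and "0 < \<epsilon>" and "real (card C) * \<epsilon> < 1" and "real n * \<epsilon> < 1"
  shows "((\<exists>b. is_PNE u C n s \<epsilon> b \<and> card (winners u C n s b) > 1)
            \<longleftrightarrow> (cond1 u C n s \<or> cond2 u C n s))
     \<and> (cond1 u C n s \<longrightarrow> is_PNE u C n s \<epsilon> (\<lambda>i. Some (top_in u C i)))
     \<and> (\<forall>X n' g. cond2_data u C n s X n' g \<longrightarrow> is_PNE u C n s \<epsilon> (\<lambda>i. Some (top_in u X i)))
     \<and> (\<forall>b. is_PNE u C n s \<epsilon> b \<and> card (winners u C n s b) > 1 \<longrightarrow>
          (cond1 u C n s \<and> (\<forall>i\<in>lazyN n. b i = Some (top_in u C i)))
          \<or> (\<exists>X n' g. cond2_data u C n s X n' g \<and> (\<forall>i\<in>lazyN n. b i = Some (top_in u X i))))"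
proof -
  interpret game C u n s \<epsilon> using assms by unfold_locales auto
  have A: "(\<exists>b. is_PNE u C n s \<epsilon> b \<and> card (winners u C n s b) > 1)
            \<longleftrightarrow> (cond1 u C n s \<or> cond2 u C n s)"
  proof
    assume "\<exists>b. is_PNE u C n s \<epsilon> b \<and> card (winners u C n s b) > 1"
    then obtain b where "is_PNE u C n s \<epsilon> b" "card (winners u C n s b) > 1" by blast
    from necessity[OF this] show "cond1 u C n s \<or> cond2 u C n s" unfolding cond2_def by blast
  next
    assume "cond1 u C n s \<or> cond2 u C n s"
    thus "\<exists>b. is_PNE u C n s \<epsilon> b \<and> card (winners u C n s b) > 1"
    proof
      assume "cond1 u C n s" thus ?thesis using suff1 by blast
    next
      assume "cond2 u C n s"
      then obtain X n' g where "cond2_data u C n s X n' g" unfolding cond2_def by blast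
      thus ?thesis using suff2 by blast
    qed
  qed
  show ?thesis using A suff1 suff2 necessity by blast
qed

end
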